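(* Let $G_f$ and $G_g$ be ROBDDs over the same variable ordering, representing boolean functions $f$ and $g$, whose node identifiers are compact and whose nodes respect the extended ordering described in the context. Then $f\equiv g$ if and only if for every level $i$ and every $j$, the $j$-th node on level $i$ of $G_f$ and the $j$-th node on level $i$ of $G_g$ are numerically identical (i.e. equal as triples $(\mathit{uid},\mathit{low},\mathit{high})$).
   Context: An OBDD over variables $x_0,x_1,\dots$ is a rooted DAG with leaves $\bot,\top$ and internal nodes labelled by a variable index $i$ with low child (for $x_i=\bot$) and high child (for $x_i=\top$), labels strictly increasing along every path; the internal nodes with label $i$ form level $i$. Each internal node $v$ has a unique identifier $x_{i,\mathit{id}}=(i,\mathit{id})$ with $\mathit{id}\in\mathbb N$ unique within level $i$, and is represented as the triple $(x_{i,\mathit{id}},\mathit{low},\mathit{high})$ where $\mathit{low},\mathit{high}$ are identifiers of internal nodes or leaf values. An ROBDD is an OBDD with no node having two identical children and no two distinct nodes with the same label and the same children. Extended ordering: on identifiers and leaves, $(i_1,\mathit{id}_1)<(i_2,\mathit{id}_2)$ iff $i_1<i_2$ or ($i_1=i_2$ and $\mathit{id}_1<\mathit{id}_2$), and every internal identifier is smaller than $\bot$, with $\bot<\top$; moreover, for any two internal nodes $(x_{i,\mathit{id}_1},\mathit{low}_1,\mathit{high}_1)$ and $(x_{i,\mathit{id}_2},\mathit{low}_2,\mathit{high}_2)$ on the same level $i$, $\mathit{id}_1<\mathit{id}_2$ iff $\mathit{low}_1<\mathit{low}_2$ or ($\mathit{low}_1=\mathit{low}_2$ and $\mathit{high}_1<\mathit{high}_2$),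 children compared by this same ordering. Identifiers are compact if, for every level $i$ with $N_i$ nodes, the identifiers on level $i$ are exactly $0,1,\dots,N_i-1$ (so the $j$-th node on level $i$ in this order has identifier $j-1$). *)

theory Defs
  imports Main
begin

(* Identifiers: (level i, id).  Pointers are identifiers of internal nodes or leaf values. *)
type_synonym uid = "nat \<times> nat"

datatype ptr = Leaf bool | Node uid

type_synonym node = "uid \<times> ptr \<times> ptr"

record bdd =
  root :: ptr
  nodes :: "node set"

definition uid_of :: "node \<Rightarrow> uid" where "uid_of n = fst n"
definition low_of :: "node \<Rightarrow> ptr" where "low_of n = fst (snd n)"
definition high_of :: "node \<Rightarrow> ptr" where "high_of n = snd (snd n)"
definition label_of :: "node \<Rightarrow> nat" where "label_of n = fst (uid_of n)"

fun ptr_less :: "ptr \<Rightarrow> ptr \<Rightarrow> bool" where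
  "ptr_less (Node (i1, id1)) (Node (i2, id2)) = (i1 < i2 \<or> (i1 = i2 \<and> id1 < id2))"
| "ptr_less (Node _) (Leaf _) = True"
| "ptr_less (Leaf _) (Node _) = False"
| "ptr_less (Leaf b1) (Leaf b2) = (\<not> b1 \<and> b2)"

inductive reach :: "node set \<Rightarrow> ptr \<Rightarrow> uid \<Rightarrow> bool" for N where
  self: "reach N (Node u) u"
| low:  "(u, l, h) \<in> N \<Longrightarrow> reach N l v \<Longrightarrow> reach N (Node u) v"
| high: "(u, l, h) \<in> N \<Longrightarrow> reach N h v \<Longrightarrow> reach N (Node u) v"

definition valid_child :: "node set \<Rightarrow> nat \<Rightarrow> ptr \<Rightarrow> bool" where
  "valid_child N i p = (case p of Leaf _ \<Rightarrow> True
     | Node v \<Rightarrow> (\<exists>n\<in>N. uid_of n = v) \<and> i < fst v)"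

definition is_obdd :: "bdd \<Rightarrow> bool" where
  "is_obdd G \<longleftrightarrow>
     finite (nodes G)
   \<and> (\<forall>n1\<in>nodes G. \<forall>n2\<in>nodes G. uid_of n1 = uid_of n2 \<longrightarrow> n1 = n2)
   \<and> (\<forall>n\<in>nodes G. valid_child (nodes G) (label_of n) (low_of n)
                 \<and> valid_child (nodes G) (label_of n) (high_of n))
   \<and> (case root G of Leaf _ \<Rightarrow> nodes G = {}
       | Node u \<Rightarrow> (\<exists>n\<in>nodes G. uid_of n = u))
   \<and> (\<forall>n\<in>nodes G. reach (nodes G) (root G) (uid_of n))"

definition is_robdd :: "bdd \<Rightarrow> bool" where
  "is_robdd G \<longleftrightarrow> is_obdd G
   \<and> (\<forall>n\<in>nodes G. low_of n \<noteq> high_of n)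
   \<and> (\<forall>n1\<in>nodes G. \<forall>n2\<in>nodes G.
        label_of n1 = label_of n2 \<and> low_of n1 = low_of n2 \<and> high_of n1 = high_of n2
        \<longrightarrow> n1 = n2)"

inductive bdd_eval :: "node set \<Rightarrow> (nat \<Rightarrow> bool) \<Rightarrow> ptr \<Rightarrow> bool \<Rightarrow> bool" for N a where
  leaf: "bdd_eval N a (Leaf b) b"
| node: "((i, k), l, h) \<in> N \<Longrightarrow> bdd_eval N a (if a i then h else l) b
           \<Longrightarrow> bdd_eval N a (Node (i, k)) b"

definition represents :: "bdd \<Rightarrow> ((nat \<Rightarrow> bool) \<Rightarrow> bool) \<Rightarrow> bool" where
  "represents G f \<longleftrightarrow> (\<forall>a. bdd_eval (nodes G) a (root G) (f a))"

definition level_ids :: "bdd \<Rightarrow> nat \<Rightarrow> nat set" where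
  "level_ids G i = {k. \<exists>n\<in>nodes G. uid_of n = (i, k)}"

definition compact_ids :: "bdd \<Rightarrow> bool" where
  "compact_ids G \<longleftrightarrow> (\<forall>i. level_ids G i = {0..<card (level_ids G i)})"

definition respects_order :: "bdd \<Rightarrow> bool" where
  "respects_order G \<longleftrightarrow>
     (\<forall>n1\<in>nodes G. \<forall>n2\<in>nodes G. label_of n1 = label_of n2 \<longrightarrow>
        (snd (uid_of n1) < snd (uid_of n2) \<longleftrightarrow>
           (ptr_less (low_of n1) (low_of n2)
            \<or> (low_of n1 = low_of n2 \<and> ptr_less (high_of n1) (high_of n2)))))"

definition level_nodes :: "bdd \<Rightarrow> nat \<Rightarrow> node list" where
  "level_nodes G i =
     map (\<lambda>k. THE n. n \<in> nodes G \<and> uid_of n = (i, k)) (sorted_list_of_set (level_ids G i))"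

definition jth_node :: "bdd \<Rightarrow> nat \<Rightarrow> nat \<Rightarrow> node option" where
  "jth_node G i j = (if j < length (level_nodes G i) then Some (level_nodes G i ! j) else None)"

end

theory Submission imports Defs begin

definition uniq :: "node set \<Rightarrow> bool" where
  "uniq N = (\<forall>n1\<in>N. \<forall>n2\<in>N. fst n1 = fst n2 \<longrightarrow> n1 = n2)"
definition vp :: "node set \<Rightarrow> ptr \<Rightarrow> bool" where
  "vp N p = (case p of Leaf _ \<Rightarrow> True | Node v \<Rightarrow> (\<exists>l h. (v,l,h) \<in> N))"
definition abv :: "nat \<Rightarrow> ptr \<Rightarrow> bool" where
  "abv k p = (case p of Leaf _ \<Rightarrow> True | Node v \<Rightarrow> k \<le> fst v)"
definition wfN :: "node set \<Rightarrow> bool" where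
  "wfN N = (finite N \<and> uniq N \<and> (\<forall>u l h. (u,l,h) \<in> N \<longrightarrow>
      vp N l \<and> abv (Suc (fst u)) l \<and> vp N h \<and> abv (Suc (fst u)) h))"
definition rN :: "node set \<Rightarrow> bool" where
  "rN N = (wfN N \<and> (\<forall>u l h. (u,l,h)\<in>N \<longrightarrow> l \<noteq> h)
     \<and> (\<forall>u l h v. (u,l,h)\<in>N \<longrightarrow> (v,l,h)\<in>N \<longrightarrow> fst u = fst v \<longrightarrow> u = v))"

lemma vp_simps[simp]: "vp N (Leaf b)" "vp N (Node v) = (\<exists>l h. (v,l,h) \<in> N)"
  by (auto simp: vp_def)
lemma abv_simps[simp]: "abv k (Leaf b)" "abv k (Node v) = (k \<le> fst v)"
  by (auto simp: abv_def)

lemma wfN_child: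
  assumes "wfN N" "(u,l,h) \<in> N"
  shows "vp N l" "abv (Suc (fst u)) l" "vp N h" "abv (Suc (fst u)) h"
  using assms unfolding wfN_def by (cases u; fastforce)+

lemma wfN_uniq: "wfN N \<Longrightarrow> (u,l,h) \<in> N \<Longrightarrow> (u,l',h') \<in> N \<Longrightarrow> l' = l \<and> h' = h"
  unfolding wfN_def uniq_def by fastforce

lemma robdd_rN:
  assumes "is_robdd G" shows "rN (nodes G)"
proof -
  have vc: "valid_child N i p = (vp N p \<and> abv (Suc i) p)" for N i p
  proof (cases p)
    case (Node v)
    have "(\<exists>n\<in>N. fst n = v) = (\<exists>l h. (v,l,h)\<in>N)" by force
    then show ?thesis using Node by (auto simp: valid_child_def uid_of_def Suc_le_eq)
  qed (simp add: valid_child_def)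
  show ?thesis using assms
    unfolding rN_def wfN_def is_robdd_def is_obdd_def uniq_def vc
    by (fastforce simp: uid_of_def low_of_def high_of_def label_of_def)
qed

lemma rN_nonred: "rN N \<Longrightarrow> (u,l,h) \<in> N \<Longrightarrow> l \<noteq> h"
  unfolding rN_def by blast
lemma rN_red: "rN N \<Longrightarrow> (u,l,h) \<in> N \<Longrightarrow> (v,l,h) \<in> N \<Longrightarrow> fst u = fst v \<Longrightarrow> u = v"
  unfolding rN_def by blast
lemma rN_wf: "rN N \<Longrightarrow> wfN N"
  unfolding rN_def by blast

lemma eval_det:
  assumes "uniq N"
  shows "bdd_eval N a p b1 \<Longrightarrow> bdd_eval N a p b2 \<Longrightarrow> b1 = b2"
proof (induction arbitrary: b2 rule: bdd_eval.induct)
  case (leaf b) then show ?case by (auto elim: bdd_eval.cases)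
next
  case (node i k l h b)
  from node.prems obtain l' h' where m: "((i,k),l',h') \<in> N"
      and e: "bdd_eval N a (if a i then h' else l') b2"
    by (cases rule: bdd_eval.cases) auto
  have "((i,k),l',h') = ((i,k),l,h)" using assms m node.hyps(1) unfolding uniq_def by (metis fst_conv)
  then have "l' = l" "h' = h" by auto
  with node.IH e show ?case by auto
qed

lemma eval_ex:
  assumes w: "wfN N"
  shows "vp N p \<Longrightarrow> \<exists>b. bdd_eval N a p b"
proof -
  have "finite (fst ` fst ` N)" using w by (auto simp: wfN_def)
  then obtain M where M: "\<forall>x\<in>fst ` fst ` N. x < M" using finite_nat_set_iff_bounded by blast
  show "vp N p \<Longrightarrow> \<exists>b. bdd_eval N a p b"
  proof (induction p rule: measure_induct_rule[where f="\<lambda>p. case p of Leaf _ \<Rightarrow> 0 | Node v \<Rightarrow> M - fst v"])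
    case (less p)
    show ?case
    proof (cases p)
      case (Leaf b) then show ?thesis by (auto intro: bdd_eval.leaf)
    next
      case (Node v)
      then obtain i k l h where v: "v = (i,k)" and mem: "((i,k),l,h)\<in>N"
        using less.prems by (cases v) auto
      define c where "c = (if a i then h else l)"
      have c1: "vp N c" "abv (Suc i) c" using wfN_child[OF w mem] by (auto simp: c_def)
      have "i < M" using M mem by force
      then have "(case c of Leaf _ \<Rightarrow> 0 | Node v \<Rightarrow> M - fst v) < (case p of Leaf _ \<Rightarrow> 0 | Node v \<Rightarrow> M - fst v)"
        using c1 Node v by (cases c) auto
      with less.IH c1 obtain b where "bdd_eval N a c b" by blast
      then have "bdd_eval N a (Node (i,k)) b" using mem by (auto simp: c_def intro: bdd_eval.node)
      then show ?thesis using Node v by auto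
    qed
  qed
qed

definition sem :: "node set \<Rightarrow> ptr \<Rightarrow> (nat \<Rightarrow> bool) \<Rightarrow> bool" where
  "sem N p a = (THE b. bdd_eval N a p b)"

lemma sem_eq: assumes w: "wfN N" and e: "bdd_eval N a p b" shows "sem N p a = b"
  unfolding sem_def
proof (rule the_equality)
  show "bdd_eval N a p b" by fact
  fix b' assume "bdd_eval N a p b'" then show "b' = b" using eval_det[of N a p b' b] w e by (auto simp: wfN_def)
qed

lemma sem_eval: "wfN N \<Longrightarrow> vp N p \<Longrightarrow> bdd_eval N a p (sem N p a)"
proof -
  assume w: "wfN N" and v: "vp N p"
  obtain b where e: "bdd_eval N a p b" using eval_ex[OF w v] by blast
  then show ?thesis using sem_eq[OF w e] by simp
qed

lemma sem_leaf[simp]: "sem N (Leaf b) a = b"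
  unfolding sem_def by (auto intro!: the_equality bdd_eval.leaf elim: bdd_eval.cases)

lemma sem_node:
  assumes w: "wfN N" and m: "(u,l,h) \<in> N"
  shows "sem N (Node u) a = (if a (fst u) then sem N h a else sem N l a)"
proof -
  obtain i k where u: "u = (i,k)" by (cases u)
  have "vp N (if a i then h else l)" using wfN_child[OF w m] by auto
  then have "bdd_eval N a (if a i then h else l) (sem N (if a i then h else l) a)"
    using sem_eval w by blast
  then have "bdd_eval N a (Node (i,k)) (sem N (if a i then h else l) a)"
    using m u by (auto intro: bdd_eval.node)
  then show ?thesis using sem_eq[OF w] u by (auto split: if_splits)
qed

lemma eval_local:
  assumes w: "wfN N"
  shows "bdd_eval N a p b \<Longrightarrow> abv k p \<Longrightarrow> (\<forall>j\<ge>k. a j = a' j) \<Longrightarrow> bdd_eval N a' p b"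
proof (induction rule: bdd_eval.induct)
  case (leaf b) show ?case by (rule bdd_eval.leaf)
next
  case (node i kk l h b)
  have "abv k (if a i then h else l)" using wfN_child[OF w node.hyps(1)] node.prems
    by (cases l; cases h) auto
  then have "bdd_eval N a' (if a i then h else l) b" using node by auto
  moreover have "a i = a' i" using node.prems by auto
  ultimately show ?case using node.hyps(1) by (auto intro: bdd_eval.node)
qed

lemma sem_local:
  assumes w: "wfN N" and "vp N p" "abv k p" "\<forall>j\<ge>k. a j = a' j"
  shows "sem N p a = sem N p a'"
  using eval_local[OF w sem_eval[OF w assms(2), of a]] assms sem_eq[OF w] by metis

lemma eval_mono:
  assumes w: "wfN N"
  shows "bdd_eval N a p b \<Longrightarrow> abv k p \<Longrightarrow> {n\<in>N. k \<le> fst (fst n)} \<subseteq> N' \<Longrightarrow> bdd_eval N' a p b"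
proof (induction rule: bdd_eval.induct)
  case (leaf b) show ?case by (rule bdd_eval.leaf)
next
  case (node i kk l h b)
  have "abv k (if a i then h else l)" using wfN_child[OF w node.hyps(1)] node.prems
    by (cases l; cases h) auto
  then have "bdd_eval N' a (if a i then h else l) b" using node by auto
  moreover have "((i,kk),l,h) \<in> N'" using node.prems node.hyps(1) by auto
  ultimately show ?case by (auto intro: bdd_eval.node)
qed


lemma descent:
  assumes w: "wfN N"
  shows "bdd_eval N a p b \<Longrightarrow> \<exists>q. vp N q \<and> abv k q \<and>
           (\<forall>a'. (\<forall>j<k. a' j = a j) \<longrightarrow> sem N p a' = sem N q a')"
proof (induction rule: bdd_eval.induct)
  case (leaf b) show ?case by (rule exI[of _ "Leaf b"]) simp
next
  case (node i kk l h b)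
  show ?case
  proof (cases "k \<le> i")
    case True then show ?thesis using node.hyps(1) by (intro exI[of _ "Node (i,kk)"]) auto
  next
    case False
    then obtain q where q: "vp N q" "abv k q"
      "\<forall>a'. (\<forall>j<k. a' j = a j) \<longrightarrow> sem N (if a i then h else l) a' = sem N q a'"
      using node.IH by blast
    have "\<forall>a'. (\<forall>j<k. a' j = a j) \<longrightarrow> sem N (Node (i,kk)) a' = sem N q a'"
    proof (intro allI impI)
      fix a' assume ag: "\<forall>j<k. a' j = a j"
      then have "a' i = a i" using False by auto
      then have "sem N (Node (i,kk)) a' = sem N (if a i then h else l) a'"
        using sem_node[OF w node.hyps(1), of a'] by auto
      then show "sem N (Node (i,kk)) a' = sem N q a'" using q(3) ag by auto
    qed
    then show ?thesis using q by blast
  qed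
qed

lemma reach_lvl:
  assumes w: "wfN N"
  shows "reach N p v \<Longrightarrow> p = Node v \<or> (\<exists>w. p = Node w \<and> fst w < fst v)"
proof (induction rule: reach.induct)
  case (self u) then show ?case by simp
next
  case (low u l h v)
  then show ?case using wfN_child[OF w low.hyps(1)] by (cases l) auto
next
  case (high u l h v)
  then show ?case using wfN_child[OF w high.hyps(1)] by (cases h) auto
qed

lemma reach_vp:
  assumes w: "wfN N"
  shows "reach N p v \<Longrightarrow> vp N p \<Longrightarrow> vp N (Node v)"
proof (induction rule: reach.induct)
  case (self u) then show ?case by simp
next
  case (low u l h v)
  then show ?case using wfN_child[OF w low.hyps(1)] by auto
next
  case (high u l h v)
  then show ?case using wfN_child[OF w high.hyps(1)] by auto
qed

lemma path_step:
  assumes w: "wfN N" and m: "(u,l,h) \<in> N" and c: "c = (if x then h else l)"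
    and r: "reach N c v"
    and IH: "\<exists>a. \<forall>a'. (\<forall>j<fst v. a' j = a j) \<longrightarrow> sem N c a' = sem N (Node v) a'"
  shows "\<exists>a. \<forall>a'. (\<forall>j<fst v. a' j = a j) \<longrightarrow> sem N (Node u) a' = sem N (Node v) a'"
proof -
  obtain a where a: "\<forall>a'. (\<forall>j<fst v. a' j = a j) \<longrightarrow> sem N c a' = sem N (Node v) a'"
    using IH by blast
  have cv: "vp N c" "abv (Suc (fst u)) c" using wfN_child[OF w m] c by auto
  have vv: "vp N (Node v)" using reach_vp[OF w r cv(1)] .
  have lt: "fst u < fst v" using reach_lvl[OF w r] cv(2) by (cases c) auto
  define a2 where "a2 = a(fst u := x)"
  have "sem N (Node u) a' = sem N (Node v) a'" if ag: "\<forall>j<fst v. a' j = a2 j" for a'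
  proof -
    have "a' (fst u) = x" using ag lt by (auto simp: a2_def)
    then have 1: "sem N (Node u) a' = sem N c a'" using sem_node[OF w m, of a'] c by auto
    define a3 where "a3 = a'(fst u := a (fst u))"
    have "\<forall>j<fst v. a3 j = a j" using ag by (auto simp: a3_def a2_def)
    then have 2: "sem N c a3 = sem N (Node v) a3" using a by blast
    have 3: "sem N c a' = sem N c a3"
      by (rule sem_local[OF w cv(1) cv(2)]) (auto simp: a3_def)
    have 4: "sem N (Node v) a' = sem N (Node v) a3"
      by (rule sem_local[OF w vv, of "fst v"]) (use lt in \<open>auto simp: a3_def\<close>)
    show ?thesis using 1 2 3 4 by simp
  qed
  then show ?thesis by blast
qed

lemma path:
  assumes w: "wfN N"
  shows "reach N p v \<Longrightarrow> vp N p \<Longrightarrow>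
     \<exists>a. \<forall>a'. (\<forall>j<fst v. a' j = a j) \<longrightarrow> sem N p a' = sem N (Node v) a'"
proof (induction rule: reach.induct)
  case (self u) then show ?case by blast
next
  case (low u l h v)
  show ?case
    by (rule path_step[OF w low.hyps(1), of l False]) (use low wfN_child[OF w low.hyps(1)] in auto)
next
  case (high u l h v)
  show ?case
    by (rule path_step[OF w high.hyps(1), of h True]) (use high wfN_child[OF w high.hyps(1)] in auto)
qed


lemma split_node:
  assumes w: "wfN N" and m: "(u,l,h) \<in> N"
  shows "sem N (Node u) (a(fst u := True)) = sem N h a"
    and "sem N (Node u) (a(fst u := False)) = sem N l a"
proof -
  have c: "vp N l" "abv (Suc (fst u)) l" "vp N h" "abv (Suc (fst u)) h" using wfN_child[OF w m] by auto
  have "sem N h (a(fst u := True)) = sem N h a" by (rule sem_local[OF w c(3) c(4)]) auto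
  then show "sem N (Node u) (a(fst u := True)) = sem N h a" using sem_node[OF w m] by simp
  have "sem N l (a(fst u := False)) = sem N l a" by (rule sem_local[OF w c(1) c(2)]) auto
  then show "sem N (Node u) (a(fst u := False)) = sem N l a" using sem_node[OF w m] by simp
qed

lemma indep:
  assumes w: "wfN N" and "vp N p" "abv (Suc k) p"
  shows "sem N p (a(k := x)) = sem N p a"
  by (rule sem_local[OF w assms(2,3)]) auto

definition QQ :: "node set \<Rightarrow> nat \<Rightarrow> bool" where
  "QQ N k = (\<forall>p1 p2. vp N p1 \<longrightarrow> vp N p2 \<longrightarrow> abv k p1 \<longrightarrow> abv k p2 \<longrightarrow> sem N p1 = sem N p2 \<longrightarrow> p1 = p2)"

lemma neq_split:
  assumes r: "rN N" and Q: "QQ N (Suc k)" and m: "(u,l,h) \<in> N" and k: "fst u = k"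
    and p: "vp N p" "abv (Suc k) p"
  shows "sem N (Node u) \<noteq> sem N p"
proof
  assume e: "sem N (Node u) = sem N p"
  have w: "wfN N" using r by (simp add: rN_def)
  have "sem N h a = sem N l a" for a
  proof -
    have "sem N h a = sem N (Node u) (a(fst u := True))" using split_node[OF w m] by simp
    also have "\<dots> = sem N p (a(k := True))" using e k by simp
    also have "\<dots> = sem N p (a(k := False))" using indep[OF w p] by simp
    also have "\<dots> = sem N (Node u) (a(fst u := False))" using e k by simp
    also have "\<dots> = sem N l a" using split_node[OF w m] by simp
    finally show ?thesis .
  qed
  then have "sem N h = sem N l" by auto
  moreover have "vp N l" "abv (Suc k) l" "vp N h" "abv (Suc k) h" using wfN_child[OF w m] k by auto
  ultimately have "h = l" using Q unfolding QQ_def by blast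
  then show False using rN_nonred[OF r m] by simp
qed

lemma same_level:
  assumes r: "rN N" and Q: "QQ N (Suc k)" and m1: "(u1,l1,h1) \<in> N" and m2: "(u2,l2,h2) \<in> N"
    and k: "fst u1 = k" "fst u2 = k" and e: "sem N (Node u1) = sem N (Node u2)"
  shows "u1 = u2"
proof -
  have w: "wfN N" using r by (simp add: rN_def)
  have "sem N h1 a = sem N h2 a" for a
    using split_node(1)[OF w m1, of a] split_node(1)[OF w m2, of a] e k by simp
  moreover have "sem N l1 a = sem N l2 a" for a
    using split_node(2)[OF w m1, of a] split_node(2)[OF w m2, of a] e k by simp
  ultimately have "sem N h1 = sem N h2" "sem N l1 = sem N l2" by auto
  moreover have "vp N l1" "abv (Suc k) l1" "vp N h1" "abv (Suc k) h1"
    "vp N l2" "abv (Suc k) l2" "vp N h2" "abv (Suc k) h2"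
    using wfN_child[OF w m1] wfN_child[OF w m2] k by auto
  ultimately have "h1 = h2" "l1 = l2" using Q unfolding QQ_def by blast+
  then show ?thesis using rN_red[OF r m1] m2 k by simp
qed

lemma at_level: "vp N p \<Longrightarrow> abv k p \<Longrightarrow> \<not> abv (Suc k) p \<Longrightarrow> \<exists>u l h. p = Node u \<and> (u,l,h)\<in>N \<and> fst u = k"
proof (cases p)
  case (Node v)
  assume "vp N p" "abv k p" "\<not> abv (Suc k) p"
  then obtain l h where "(v,l,h) \<in> N" "fst v = k" using Node by auto
  then show ?thesis using Node by blast
qed simp

lemma QQ_step:
  assumes r: "rN N" and Q: "QQ N (Suc k)" shows "QQ N k"
  unfolding QQ_def
proof (intro allI impI)
  fix p1 p2 assume v1: "vp N p1" and v2: "vp N p2" and a1: "abv k p1" and a2: "abv k p2"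
    and e: "sem N p1 = sem N p2"
  show "p1 = p2"
  proof (cases "abv (Suc k) p1")
    case A1: True
    show ?thesis
    proof (cases "abv (Suc k) p2")
      case True then show ?thesis using A1 Q v1 v2 e unfolding QQ_def by blast
    next
      case False
      then obtain u2 l2 h2 where p2: "p2 = Node u2" "(u2,l2,h2) \<in> N" "fst u2 = k"
        using at_level[OF v2 a2] False by blast
      then show ?thesis using neq_split[OF r Q p2(2) p2(3) v1 A1] e by simp
    qed
  next
    case A1: False
    then obtain u1 l1 h1 where p1: "p1 = Node u1" "(u1,l1,h1) \<in> N" "fst u1 = k"
      using at_level[OF v1 a1] A1 by blast
    show ?thesis
    proof (cases "abv (Suc k) p2")
      case True then show ?thesis using neq_split[OF r Q p1(2) p1(3) v2 True] e p1 by simp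
    next
      case False
      then obtain u2 l2 h2 where p2: "p2 = Node u2" "(u2,l2,h2) \<in> N" "fst u2 = k"
        using at_level[OF v2 a2] False by blast
      then show ?thesis using same_level[OF r Q p1(2) p2(2) p1(3) p2(3)] e p1 by simp
    qed
  qed
qed

lemma bound_labels:
  fixes N :: "node set" assumes "finite N" obtains M :: nat where "\<forall>n\<in>N. fst (fst n) < M"
proof -
  have "finite (fst ` fst ` N)" using assms by auto
  then obtain M where M: "\<forall>x\<in>fst ` fst ` N. x < M" using finite_nat_set_iff_bounded by blast
  have "\<forall>n\<in>N. fst (fst n) < M"
  proof
    fix n assume "n \<in> N"
    then have "fst (fst n) \<in> fst ` fst ` N" by blast
    then show "fst (fst n) < M" using M by blast
  qed
  then show ?thesis by (rule that)
qed

lemma QQ_all: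
  assumes r: "rN N" shows "QQ N k"
proof -
  have w: "wfN N" using r by (simp add: rN_def)
  obtain M where M: "\<forall>n\<in>N. fst (fst n) < M" using bound_labels w by (auto simp: wfN_def)
  show ?thesis
  proof (induction "M - k" arbitrary: k)
    case 0
    have lf: "vp N p \<Longrightarrow> abv k p \<Longrightarrow> \<exists>b. p = Leaf b" for p
      using M 0 by (cases p) force+
    show ?case unfolding QQ_def
    proof (intro allI impI)
      fix p1 p2 assume "vp N p1" "vp N p2" "abv k p1" "abv k p2" "sem N p1 = sem N p2"
      moreover obtain b1 b2 where "p1 = Leaf b1" "p2 = Leaf b2" using lf calculation by blast
      ultimately show "p1 = p2" by (simp add: fun_eq_iff)
    qed
  next
    case (Suc d)
    then have "QQ N (Suc k)" by (metis Suc_diff_Suc diff_Suc_1 zero_less_Suc zero_less_diff)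
    then show ?case using QQ_step[OF r] by blast
  qed
qed

lemma sem_inj:
  assumes "rN N" "vp N p1" "vp N p2" "sem N p1 = sem N p2" shows "p1 = p2"
proof -
  have "abv 0 p" for p by (cases p) auto
  then show ?thesis using QQ_all[OF assms(1), of 0] assms unfolding QQ_def by blast
qed


lemma transfer:
  assumes w1: "wfN N1" and w2: "wfN N2" and T: "{n\<in>N1. k \<le> fst (fst n)} \<subseteq> N2"
    and v: "vp N1 p" and a: "abv k p"
  shows "vp N2 p" "sem N2 p = sem N1 p"
proof -
  show "vp N2 p" using v a T by (cases p) force+
  show "sem N2 p = sem N1 p"
  proof
    fix x
    have "bdd_eval N2 x p (sem N1 p x)" using eval_mono[OF w1 sem_eval[OF w1 v] a T] .
    then show "sem N2 p x = sem N1 p x" using sem_eq[OF w2] by blast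
  qed
qed

lemma counterpart:
  assumes r1: "rN N1" and r2: "rN N2"
    and T: "{n\<in>N1. Suc k \<le> fst (fst n)} = {n\<in>N2. Suc k \<le> fst (fst n)}"
    and v1: "vp N1 r1" and v2: "vp N2 r2" and e: "sem N1 r1 = sem N2 r2"
    and m: "(u,l,h) \<in> N1" and k: "fst u = k" and re: "reach N1 r1 u"
  shows "\<exists>v. (v,l,h) \<in> N2 \<and> fst v = k"
proof -
  have w1: "wfN N1" and w2: "wfN N2" using r1 r2 by (auto simp: rN_wf)
  have T1: "{n\<in>N1. Suc k \<le> fst (fst n)} \<subseteq> N2" and T2: "{n\<in>N2. Suc k \<le> fst (fst n)} \<subseteq> N1"
    using T by blast+
  obtain a where a: "\<forall>a'. (\<forall>j<k. a' j = a j) \<longrightarrow> sem N1 r1 a' = sem N1 (Node u) a'"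
    using path[OF w1 re v1] k by blast
  obtain b where "bdd_eval N2 a r2 b" using eval_ex[OF w2 v2] by blast
  from descent[OF w2 this, of k] obtain q where q: "vp N2 q" "abv k q"
    "\<forall>a'. (\<forall>j<k. a' j = a j) \<longrightarrow> sem N2 r2 a' = sem N2 q a'" by blast
  have vu: "vp N1 (Node u)" using m by auto
  have eq: "sem N2 q = sem N1 (Node u)"
  proof
    fix x
    define a3 where "a3 = (\<lambda>j. if j < k then a j else x j)"
    have ag: "\<forall>j<k. a3 j = a j" by (simp add: a3_def)
    have "sem N2 q x = sem N2 q a3" by (rule sem_local[OF w2 q(1) q(2)]) (simp add: a3_def)
    also have "\<dots> = sem N2 r2 a3" using q(3) ag by simp
    also have "\<dots> = sem N1 r1 a3" using e by simp
    also have "\<dots> = sem N1 (Node u) a3" using a ag by simp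
    also have "\<dots> = sem N1 (Node u) x" by (rule sem_local[OF w1 vu, of k]) (auto simp: a3_def k)
    finally show "sem N2 q x = sem N1 (Node u) x" .
  qed
  show ?thesis
  proof (cases "abv (Suc k) q")
    case True
    have "vp N1 q" "sem N1 q = sem N2 q" using transfer[OF w2 w1 T2 q(1) True] by auto
    then show ?thesis using neq_split[OF r1 QQ_all[OF r1] m k _ True] eq by simp
  next
    case False
    then obtain v l' h' where qv: "q = Node v" "(v,l',h') \<in> N2" "fst v = k"
      using at_level[OF q(1) q(2)] by blast
    have c1: "vp N1 l" "abv (Suc k) l" "vp N1 h" "abv (Suc k) h" using wfN_child[OF w1 m] k by auto
    have c2: "vp N2 l'" "abv (Suc k) l'" "vp N2 h'" "abv (Suc k) h'" using wfN_child[OF w2 qv(2)] qv by auto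
    have tl: "vp N2 l" "sem N2 l = sem N1 l" using transfer[OF w1 w2 T1 c1(1) c1(2)] by auto
    have th: "vp N2 h" "sem N2 h = sem N1 h" using transfer[OF w1 w2 T1 c1(3) c1(4)] by auto
    have "sem N2 h' x = sem N1 h x" for x
      using split_node(1)[OF w2 qv(2), of x] split_node(1)[OF w1 m, of x] eq qv k by simp
    then have "sem N2 h' = sem N2 h" using th by auto
    then have hh: "h' = h" using sem_inj[OF r2 c2(3) th(1)] by simp
    have "sem N2 l' x = sem N1 l x" for x
      using split_node(2)[OF w2 qv(2), of x] split_node(2)[OF w1 m, of x] eq qv k by simp
    then have "sem N2 l' = sem N2 l" using tl by auto
    then have ll: "l' = l" using sem_inj[OF r2 c2(1) tl(1)] by simp
    show ?thesis using qv hh ll by blast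
  qed
qed


definition Pk :: "node set \<Rightarrow> nat \<Rightarrow> (ptr \<times> ptr) set" where
  "Pk N k = {(l,h). \<exists>u. (u,l,h) \<in> N \<and> fst u = k}"

definition lexlt :: "ptr \<times> ptr \<Rightarrow> ptr \<times> ptr \<Rightarrow> bool" where
  "lexlt x y = (ptr_less (fst x) (fst y) \<or> (fst x = fst y \<and> ptr_less (snd x) (snd y)))"

lemma id_count:
  assumes r: "rN (nodes G)" and c: "compact_ids G" and o: "respects_order G"
    and m: "(u,l,h) \<in> nodes G" and k: "fst u = k"
  shows "snd u = card {pr \<in> Pk (nodes G) k. lexlt pr (l,h)}"
proof -
  let ?N = "nodes G"
  have w: "wfN ?N" using r by (simp add: rN_wf)
  have un: "uniq ?N" using w by (simp add: wfN_def)
  have fin: "finite ?N" using w by (simp add: wfN_def)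
  define S where "S = {m \<in> ?N. fst (fst m) = k \<and> snd (fst m) < snd u}"
  have lid: "level_ids G k = {0..<card (level_ids G k)}" using c by (simp add: compact_ids_def)
  have uin: "snd u \<in> level_ids G k" using m k unfolding level_ids_def uid_of_def
    by (intro CollectI bexI[of _ "(u,l,h)"]) auto
  have img: "(\<lambda>m. snd (fst m)) ` S = {..<snd u}"
  proof
    show "(\<lambda>m. snd (fst m)) ` S \<subseteq> {..<snd u}" by (auto simp: S_def)
    show "{..<snd u} \<subseteq> (\<lambda>m. snd (fst m)) ` S"
    proof
      fix j assume "j \<in> {..<snd u}"
      then have "j \<in> level_ids G k" using uin lid by (metis atLeastLessThan_iff lessThan_iff order.strict_trans zero_le)
      then obtain n where "n \<in> ?N" "fst n = (k,j)" by (auto simp: level_ids_def uid_of_def)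
      then show "j \<in> (\<lambda>m. snd (fst m)) ` S" using \<open>j \<in> {..<snd u}\<close> by (force simp: S_def)
    qed
  qed
  have inj: "inj_on (\<lambda>m. snd (fst m)) S"
  proof
    fix x y assume "x \<in> S" "y \<in> S" "snd (fst x) = snd (fst y)"
    then have "fst x = fst y" "x \<in> ?N" "y \<in> ?N" by (auto simp: S_def prod_eq_iff)
    then show "x = y" using un by (auto simp: uniq_def)
  qed
  have c1: "card S = snd u" using card_image[OF inj] img by simp
  define S' where "S' = {m \<in> ?N. fst (fst m) = k \<and> lexlt (snd m) (l,h)}"
  have "S = S'"
  proof -
    have "m \<in> ?N \<Longrightarrow> fst (fst m) = k \<Longrightarrow> (snd (fst m) < snd u) = lexlt (snd m) (l,h)" for m
    proof -
      assume "m \<in> ?N" "fst (fst m) = k"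
      then show ?thesis using o[unfolded respects_order_def, rule_format, of m "(u,l,h)"] m k
        by (simp add: lexlt_def uid_of_def label_of_def low_of_def high_of_def)
    qed
    then show ?thesis unfolding S_def S'_def by blast
  qed
  have img2: "snd ` S' = {pr \<in> Pk ?N k. lexlt pr (l,h)}"
    unfolding S'_def Pk_def by force
  have inj2: "inj_on snd S'"
  proof
    fix x y assume xy: "x \<in> S'" "y \<in> S'" "snd x = snd y"
    obtain u1 l1 h1 where x: "x = (u1,l1,h1)" by (cases x)
    obtain u2 l2 h2 where y: "y = (u2,l2,h2)" by (cases y)
    have "(u1,l1,h1) \<in> ?N" "(u2,l1,h1) \<in> ?N" "fst u1 = fst u2" using xy x y by (auto simp: S'_def)
    then have "u1 = u2" using rN_red[OF r] by blast
    then show "x = y" using x y xy by simp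
  qed
  show ?thesis using c1 \<open>S = S'\<close> card_image[OF inj2] img2 by simp
qed


definition good :: "bdd \<Rightarrow> bool" where
  "good G = (rN (nodes G) \<and> compact_ids G \<and> respects_order G \<and> vp (nodes G) (root G)
     \<and> (\<forall>n\<in>nodes G. reach (nodes G) (root G) (fst n)))"

lemma goodI:
  assumes "is_robdd G" "compact_ids G" "respects_order G" shows "good G"
proof -
  have o: "is_obdd G" using assms(1) by (simp add: is_robdd_def)
  have "vp (nodes G) (root G)"
  proof (cases "root G")
    case (Node u)
    then obtain n where "n \<in> nodes G" "fst n = u" using o by (auto simp: is_obdd_def uid_of_def)
    then show ?thesis using Node by (cases n) auto
  qed simp
  moreover have "\<forall>n\<in>nodes G. reach (nodes G) (root G) (fst n)" using o by (simp add: is_obdd_def uid_of_def)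
  ultimately show ?thesis using assms robdd_rN by (simp add: good_def)
qed

lemma Pk_E: "pr \<in> Pk N k \<Longrightarrow> \<exists>u l h. pr = (l,h) \<and> (u,l,h)\<in>N \<and> fst u = k"
  by (cases pr) (force simp: Pk_def)

lemma good_rN: "good G \<Longrightarrow> rN (nodes G)"
  unfolding good_def by blast
lemma good_vp: "good G \<Longrightarrow> vp (nodes G) (root G)"
  unfolding good_def by blast

lemma good_reach: "good G \<Longrightarrow> n \<in> nodes G \<Longrightarrow> reach (nodes G) (root G) (fst n)"
  unfolding good_def by blast

lemma level_sub:
  assumes g1: "good G1" and g2: "good G2" and e: "sem (nodes G1) (root G1) = sem (nodes G2) (root G2)"
    and T: "{n\<in>nodes G1. Suc k \<le> fst (fst n)} = {n\<in>nodes G2. Suc k \<le> fst (fst n)}"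
  shows "{n\<in>nodes G1. fst (fst n) = k} \<subseteq> nodes G2"
proof
  fix n assume n: "n \<in> {n\<in>nodes G1. fst (fst n) = k}"
  obtain u l h where nn: "n = (u,l,h)" by (cases n)
  have m: "(u,l,h) \<in> nodes G1" and k: "fst u = k" using n nn by auto
  have r1: "rN (nodes G1)" and r2: "rN (nodes G2)" using g1 g2 by (auto simp: good_def)
  have v1: "vp (nodes G1) (root G1)" and v2: "vp (nodes G2) (root G2)" using g1 g2 by (auto simp: good_def)
  have P: "Pk (nodes G1) k = Pk (nodes G2) k"
  proof
    show "Pk (nodes G1) k \<subseteq> Pk (nodes G2) k"
    proof
      fix pr assume "pr \<in> Pk (nodes G1) k"
      then obtain u' l' h' where "pr = (l',h')" "(u',l',h') \<in> nodes G1" "fst u' = k" using Pk_E by blast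
      moreover have "reach (nodes G1) (root G1) u'" using g1 calculation(2) by (force simp: good_def)
      ultimately obtain v' where "(v',l',h') \<in> nodes G2" "fst v' = k" "pr = (l',h')"
        using counterpart[OF r1 r2 T v1 v2 e] by blast
      then show "pr \<in> Pk (nodes G2) k" unfolding Pk_def by blast
    qed
    show "Pk (nodes G2) k \<subseteq> Pk (nodes G1) k"
    proof
      fix pr assume "pr \<in> Pk (nodes G2) k"
      then obtain u' l' h' where "pr = (l',h')" "(u',l',h') \<in> nodes G2" "fst u' = k" using Pk_E by blast
      moreover have "reach (nodes G2) (root G2) u'" using g2 calculation(2) by (force simp: good_def)
      ultimately obtain v' where "(v',l',h') \<in> nodes G1" "fst v' = k" "pr = (l',h')"
        using counterpart[OF r2 r1 T[symmetric] v2 v1 e[symmetric]] by blast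
      then show "pr \<in> Pk (nodes G1) k" unfolding Pk_def by blast
    qed
  qed
  have "reach (nodes G1) (root G1) u" using g1 m by (force simp: good_def)
  then obtain v where v: "(v,l,h) \<in> nodes G2" "fst v = k"
    using counterpart[OF r1 r2 T v1 v2 e m k] by blast
  have "snd v = snd u"
    using id_count[OF r2 _ _ v(1) v(2)] id_count[OF r1 _ _ m k] P g1 g2 by (simp add: good_def)
  then have "v = u" using v(2) k by (simp add: prod_eq_iff)
  then show "n \<in> nodes G2" using v nn by simp
qed

lemma nodes_eq:
  assumes g1: "good G1" and g2: "good G2" and e: "sem (nodes G1) (root G1) = sem (nodes G2) (root G2)"
  shows "nodes G1 = nodes G2"
proof -
  have "rN (nodes G1)" "rN (nodes G2)" using g1 g2 unfolding good_def by blast+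
  then have "wfN (nodes G1)" "wfN (nodes G2)" using rN_wf by blast+
  then have "finite (nodes G1)" "finite (nodes G2)" unfolding wfN_def by blast+
  then have "finite (nodes G1 \<union> nodes G2)" by simp
  then obtain M where M: "\<forall>n\<in>nodes G1 \<union> nodes G2. fst (fst n) < M" by (rule bound_labels)
  have "{n\<in>nodes G1. k \<le> fst (fst n)} = {n\<in>nodes G2. k \<le> fst (fst n)}" for k
  proof (induction "M - k" arbitrary: k)
    case 0
    then have Mk: "M \<le> k" by simp
    have "{n\<in>nodes G1. k \<le> fst (fst n)} = {}"
    proof -
      { fix n assume n: "n \<in> nodes G1" "k \<le> fst (fst n)"
        then have "fst (fst n) < M" using M by blast
        then have False using n(2) Mk by simp }
      then show ?thesis by blast
    qed
    moreover have "{n\<in>nodes G2. k \<le> fst (fst n)} = {}"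
    proof -
      { fix n assume n: "n \<in> nodes G2" "k \<le> fst (fst n)"
        then have "fst (fst n) < M" using M by blast
        then have False using n(2) Mk by simp }
      then show ?thesis by blast
    qed
    ultimately show ?case by (rule trans[OF _ sym])
  next
    case (Suc d)
    have "d = M - Suc k" using Suc.hyps(2) by arith
    then have T: "{n\<in>nodes G1. Suc k \<le> fst (fst n)} = {n\<in>nodes G2. Suc k \<le> fst (fst n)}"
      using Suc.hyps(1) by blast
    have s1: "{n\<in>nodes G1. fst (fst n) = k} \<subseteq> nodes G2" using level_sub[OF g1 g2 e T] .
    have s2: "{n\<in>nodes G2. fst (fst n) = k} \<subseteq> nodes G1" using level_sub[OF g2 g1 e[symmetric] T[symmetric]] .
    have d1: "{n\<in>nodes G1. k \<le> fst (fst n)} = {n\<in>nodes G1. Suc k \<le> fst (fst n)} \<union> {n\<in>nodes G1. fst (fst n) = k}" by auto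
    have d2: "{n\<in>nodes G2. k \<le> fst (fst n)} = {n\<in>nodes G2. Suc k \<le> fst (fst n)} \<union> {n\<in>nodes G2. fst (fst n) = k}" by auto
    show ?case unfolding d1 d2 using T s1 s2 by blast
  qed
  from this[of 0] show ?thesis by simp
qed


lemma set_level_nodes:
  assumes w: "wfN (nodes G)"
  shows "set (level_nodes G i) = {n\<in>nodes G. fst (fst n) = i}"
proof -
  have fin: "finite (nodes G)" and un: "uniq (nodes G)" using w by (auto simp: wfN_def)
  have "level_ids G i \<subseteq> snd ` fst ` nodes G" by (force simp: level_ids_def uid_of_def)
  then have finl: "finite (level_ids G i)" using fin finite_subset by blast
  have the: "(THE n. n \<in> nodes G \<and> uid_of n = (i, k)) = n" if "n \<in> nodes G" "fst n = (i,k)" for n k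
    using that un by (auto simp: uid_of_def uniq_def intro!: the_equality)
  show ?thesis
  proof
    show "set (level_nodes G i) \<subseteq> {n\<in>nodes G. fst (fst n) = i}"
    proof
      fix x assume "x \<in> set (level_nodes G i)"
      then obtain k where "k \<in> level_ids G i" "x = (THE n. n \<in> nodes G \<and> uid_of n = (i, k))"
        using finl by (auto simp: level_nodes_def)
      moreover then obtain n where "n \<in> nodes G" "fst n = (i,k)" by (auto simp: level_ids_def uid_of_def)
      ultimately show "x \<in> {n\<in>nodes G. fst (fst n) = i}" using the by auto
    qed
    show "{n\<in>nodes G. fst (fst n) = i} \<subseteq> set (level_nodes G i)"
    proof
      fix n assume n: "n \<in> {n\<in>nodes G. fst (fst n) = i}"
      then have "snd (fst n) \<in> level_ids G i" by (force simp: level_ids_def uid_of_def)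
      moreover have "fst n = (i, snd (fst n))" using n by (simp add: prod_eq_iff)
      ultimately show "n \<in> set (level_nodes G i)" using the[of n "snd (fst n)"] n finl
        by (force simp: level_nodes_def)
    qed
  qed
qed

lemma jth_list:
  assumes "\<forall>j. jth_node G1 i j = jth_node G2 i j"
  shows "level_nodes G1 i = level_nodes G2 i"
proof -
  have len: "length (level_nodes G1 i) = length (level_nodes G2 i)"
  proof (rule ccontr)
    assume ne: "length (level_nodes G1 i) \<noteq> length (level_nodes G2 i)"
    let ?j = "min (length (level_nodes G1 i)) (length (level_nodes G2 i))"
    have "jth_node G1 i ?j = jth_node G2 i ?j" using assms by blast
    then show False using ne unfolding jth_node_def by (auto split: if_splits simp: min_def)
  qed
  moreover have "level_nodes G1 i ! j = level_nodes G2 i ! j" if "j < length (level_nodes G1 i)" for j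
    using assms[rule_format, of j] that len by (simp add: jth_node_def)
  ultimately show ?thesis by (simp add: list_eq_iff_nth_eq)
qed

theorem proposition7:
  fixes Gf Gg :: bdd and f g :: "(nat \<Rightarrow> bool) \<Rightarrow> bool"
  assumes "is_robdd Gf" and "is_robdd Gg"
    and "represents Gf f" and "represents Gg g"
    and "compact_ids Gf" and "compact_ids Gg"
    and "respects_order Gf" and "respects_order Gg"
  shows "f = g \<longleftrightarrow>
           ((\<forall>i j. jth_node Gf i j = jth_node Gg i j)
            \<and> (\<forall>b. root Gf = Leaf b \<longleftrightarrow> root Gg = Leaf b))"
proof -
  have g1: "good Gf" using goodI[OF assms(1,5,7)] .
  have g2: "good Gg" using goodI[OF assms(2,6,8)] .
  have r1: "rN (nodes Gf)" using good_rN[OF g1] .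
  have r2: "rN (nodes Gg)" using good_rN[OF g2] .
  have w1: "wfN (nodes Gf)" using rN_wf[OF r1] .
  have w2: "wfN (nodes Gg)" using rN_wf[OF r2] .
  have v1: "vp (nodes Gf) (root Gf)" using good_vp[OF g1] .
  have v2: "vp (nodes Gg) (root Gg)" using good_vp[OF g2] .
  have sf: "sem (nodes Gf) (root Gf) = f"
  proof
    fix a show "sem (nodes Gf) (root Gf) a = f a" using sem_eq[OF w1 assms(3)[unfolded represents_def, rule_format, of a]] .
  qed
  have sg: "sem (nodes Gg) (root Gg) = g"
  proof
    fix a show "sem (nodes Gg) (root Gg) a = g a" using sem_eq[OF w2 assms(4)[unfolded represents_def, rule_format, of a]] .
  qed
  show ?thesis
  proof
    assume "f = g"
    then have e: "sem (nodes Gf) (root Gf) = sem (nodes Gg) (root Gg)" using sf sg by simp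
    have N: "nodes Gf = nodes Gg" using nodes_eq[OF g1 g2 e] .
    have "root Gf = root Gg" using sem_inj[OF r1 v1, of "root Gg"] v2 e N by simp
    moreover have "jth_node Gf i j = jth_node Gg i j" for i j
      using N by (simp add: jth_node_def level_nodes_def level_ids_def)
    ultimately show "(\<forall>i j. jth_node Gf i j = jth_node Gg i j) \<and> (\<forall>b. root Gf = Leaf b \<longleftrightarrow> root Gg = Leaf b)"
      by simp
  next
    assume H: "(\<forall>i j. jth_node Gf i j = jth_node Gg i j) \<and> (\<forall>b. root Gf = Leaf b \<longleftrightarrow> root Gg = Leaf b)"
    have "{n\<in>nodes Gf. fst (fst n) = i} = {n\<in>nodes Gg. fst (fst n) = i}" for i
      using jth_list[of Gf i Gg] H set_level_nodes[OF w1, of i] set_level_nodes[OF w2, of i] by simp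
    then have N: "nodes Gf = nodes Gg"
    proof -
      assume E: "\<And>i. {n\<in>nodes Gf. fst (fst n) = i} = {n\<in>nodes Gg. fst (fst n) = i}"
      show ?thesis
      proof (rule set_eqI)
        fix n
        have a: "(n \<in> nodes Gf) = (n \<in> {x\<in>nodes Gf. fst (fst x) = fst (fst n)})" by simp
        have b: "(n \<in> nodes Gg) = (n \<in> {x\<in>nodes Gg. fst (fst x) = fst (fst n)})" by simp
        show "n \<in> nodes Gf \<longleftrightarrow> n \<in> nodes Gg" unfolding a b E[of "fst (fst n)"] ..
      qed
    qed
    have H2: "\<forall>b. root Gf = Leaf b \<longleftrightarrow> root Gg = Leaf b" using H by (rule conjunct2)
    have R: "root Gf = root Gg"
    proof (cases "root Gf")
      case (Leaf b) then show ?thesis using H2 by simp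
    next
      case (Node u)
      obtain v where rv: "root Gg = Node v"
      proof (cases "root Gg")
        case (Leaf b) then have False using H2[rule_format, of b] Node by simp
        then show ?thesis ..
      next
        case (Node v) then show ?thesis by (rule that)
      qed
      have "vp (nodes Gf) (Node u)" using v1 Node by simp
      then obtain l h where mu: "(u,l,h) \<in> nodes Gf" by simp blast
      have "vp (nodes Gg) (Node v)" using v2 rv by simp
      then obtain l' h' where mv0: "(v,l',h') \<in> nodes Gg" by simp blast
      then have mv: "(v,l',h') \<in> nodes Gf" using N by simp
      have "reach (nodes Gf) (root Gf) v" using good_reach[OF g1 mv] by simp
      then have "root Gf = Node v \<or> (\<exists>w. root Gf = Node w \<and> fst w < fst v)" by (rule reach_lvl[OF w1])
      then have 1: "u = v \<or> fst u < fst v" using Node by auto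
      have "reach (nodes Gg) (root Gg) u" using good_reach[OF g2, of "(u,l,h)"] mu N by simp
      then have "root Gg = Node u \<or> (\<exists>w. root Gg = Node w \<and> fst w < fst u)" by (rule reach_lvl[OF w2])
      then have 2: "v = u \<or> fst v < fst u" using rv by auto
      from 1 2 Node rv show ?thesis by auto
    qed
    show "f = g" using sf sg N R by simp
  qed
qed

end
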